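(* Let $n$ be a prime and $k$ an integer with $2\le k<n/2$. Let $\underline{g}=[g_1,\dots,g_k]\in\underline{\mathbf{G}}_{\mathrm{tot}}$. For $p=0,1,\dots,n-1$ put $v_p=1+p\,g_1 \pmod n$ and let $\mathcal{E}_p$ be the set of entries of the vector $\underline{r}_{\underline{g}}+p\,g_1\cdot\underline{1}\pmod n$. Then $(v_0,\mathcal{E}_0,v_1,\mathcal{E}_1,\dots,v_{n-1},\mathcal{E}_{n-1},v_0)$ is a Hamiltonian (Berge) cycle of the complete $k$-uniform hypergraph $K_n^k$ on vertex set $[n]$: the vertices $v_0,\dots,v_{n-1}$ are exactly the elements of $[n]$, each listed once; the $\mathcal{E}_p$ are $n$ pairwise distinct $k$-subsets of $[n]$; and $\{v_p,v_{p+1}\}\subseteq\mathcal{E}_p$ for every $p$ (indices mod $n$). Moreover $\{\mathcal{E}_0,\dots,\mathcal{E}_{n-1}\}$ is exactly the set of underlying sets of the elements of $\underline{\mathbf{C}}_{\underline{g}}$.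
   Context: $[n]=\{1,\dots,n\}$; reduction mod $n$ is entrywise with representatives in $[n]$, and $\underline{1}$ is the all-ones vector of length $k$. For an integer vector $\underline{g}=[g_1,\dots,g_k]$ with $g_i\ge1$ for $i\in[k-1]$ and $g_1+\dots+g_{k-1}\le n-1$, the representative vector is $\underline{r}_{\underline{g}}=[1,1+g_1,1+g_1+g_2,\dots,1+g_1+\cdots+g_{k-1}]$ and $\underline{\mathbf{C}}_{\underline{g}}=\{\underline{r}_{\underline{g}}+p\cdot\underline{1}\ (\mathrm{mod}\ n):p=0,\dots,n-1\}$. The generator set: let $\sigma_{\min}=k-1$ and $\sigma_{\max}=n-\lceil n/k\rceil$. For $\sigma\in[\sigma_{\min},\sigma_{\max}]$ let $\underline{\mathbf{S}}_\sigma=\{[c_1,\dots,c_{k-1}]\in\mathbb{Z}^{k-1}:\sum_i c_i=\sigma,\ 1\le c_i\le n-\sigma\}$ and $\underline{\mathbf{G}}_\sigma=\{[c_1,\dots,c_{k-1},m]:[c_1,\dots,c_{k-1}]\in\underline{\mathbf{S}}_\sigma\}$ where $m=-\sigma$ if $\sigma\le\lfloor n/2\rfloor$ and $m=n-\sigma$ otherwise. Finally $\underline{\mathbf{G}}_{\mathrm{tot}}=\bigcup_{\sigma=\sigma_{\min}}^{\sigma_{\max}}\underline{\mathbf{G}}_\sigma$. The complete $k$-uniform hypergraph $K_n^k$ has vertex set $[n]$ and every $k$-subset of $[n]$ as a hyperedge. A (Berge) Hamiltonian cycle is a sequence $(v_1,\mathcal{E}_1,v_2,\dots,v_n,\mathcal{E}_n,v_1)$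 with $v_1,\dots,v_n$ a permutation of $[n]$, $\mathcal{E}_1,\dots,\mathcal{E}_n$ distinct hyperedges, and $v_i,v_{i+1}\in\mathcal{E}_i$ (indices mod $n$). *)

theory Defs
  imports Complex_Main "HOL-Computational_Algebra.Primes"
begin

definition modn :: "nat \<Rightarrow> int \<Rightarrow> int" where
  "modn n x = (x - 1) mod int n + 1"

text \<open>Vectors of length k are int lists; entry i (1-based) is the list element at index i-1.
  Representative vector r_g = [1, 1+g_1, ..., 1+g_1+...+g_(k-1)].\<close>
definition rep_vec :: "nat \<Rightarrow> int list \<Rightarrow> int list" where
  "rep_vec k g = map (\<lambda>i. 1 + sum_list (take i g)) [0..<k]"

definition C_set :: "nat \<Rightarrow> nat \<Rightarrow> int list \<Rightarrow> int list set" where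
  "C_set n k g = {map (\<lambda>x. modn n (x + int p)) (rep_vec k g) | p. p < n}"

definition sigma_min :: "nat \<Rightarrow> int" where
  "sigma_min k = int k - 1"

definition sigma_max :: "nat \<Rightarrow> nat \<Rightarrow> int" where
  "sigma_max n k = int n - \<lceil>real n / real k\<rceil>"

definition S_set :: "nat \<Rightarrow> nat \<Rightarrow> int \<Rightarrow> int list set" where
  "S_set n k \<sigma> = {c. length c = k - 1 \<and> sum_list c = \<sigma> \<and>
       (\<forall>i < k - 1. 1 \<le> c ! i \<and> c ! i \<le> int n - \<sigma>)}"

definition G_set :: "nat \<Rightarrow> nat \<Rightarrow> int \<Rightarrow> int list set" where
  "G_set n k \<sigma> = {c @ [if \<sigma> \<le> int n div 2 then - \<sigma> else int n - \<sigma>] | c. c \<in> S_set n k \<sigma>}"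

definition G_tot :: "nat \<Rightarrow> nat \<Rightarrow> int list set" where
  "G_tot n k = (\<Union>\<sigma> \<in> {sigma_min k .. sigma_max n k}. G_set n k \<sigma>)"

definition hyperedges_K :: "nat \<Rightarrow> nat \<Rightarrow> int set set" where
  "hyperedges_K n k = {E. E \<subseteq> {1..int n} \<and> card E = k}"

definition berge_ham_cycle :: "nat \<Rightarrow> nat \<Rightarrow> (nat \<Rightarrow> int) \<Rightarrow> (nat \<Rightarrow> int set) \<Rightarrow> bool" where
  "berge_ham_cycle n k v E \<longleftrightarrow>
     bij_betw v {0..<n} {1..int n} \<and>
     (\<forall>p < n. E p \<in> hyperedges_K n k) \<and>
     inj_on E {0..<n} \<and>
     (\<forall>p < n. {v p, v ((p + 1) mod n)} \<subseteq> E p)"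

end

theory Submission
  imports Defs
begin

lemma modn_eq_iff: "0 < n \<Longrightarrow> modn n x = modn n y \<longleftrightarrow> int n dvd (x - y)"
proof -
  assume "0 < n"
  have "modn n x = modn n y \<longleftrightarrow> (x - 1) mod int n = (y - 1) mod int n"
    unfolding modn_def by simp
  also have "\<dots> \<longleftrightarrow> int n dvd ((x - 1) - (y - 1))" by (rule mod_eq_dvd_iff)
  finally show ?thesis by simp
qed

lemma modn_range: "0 < n \<Longrightarrow> modn n x \<in> {1..int n}"
proof -
  assume "0 < n"
  then have "(x-1) mod int n < int n" "0 \<le> (x-1) mod int n" by simp_all
  then show ?thesis unfolding modn_def by simp
qed

lemma modn_mod: "modn n x mod int n = x mod int n"
  unfolding modn_def by (simp add: mod_add_left_eq)

lemma not_dvd_small: "0 < a \<Longrightarrow> a < int n \<Longrightarrow> \<not> int n dvd a"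
  using zdvd_imp_le by fastforce

theorem lemma1:
  fixes n k :: nat and g :: "int list"
  assumes "prime n"
    and "2 \<le> k" and "2 * k < n"
    and "g \<in> G_tot n k"
  defines "v \<equiv> (\<lambda>p::nat. modn n (1 + int p * g ! 0))"
    and "E \<equiv> (\<lambda>p::nat. set (map (\<lambda>x. modn n (x + int p * g ! 0)) (rep_vec k g)))"
  shows "berge_ham_cycle n k v E
     \<and> bij_betw v {0..<n} {1..int n}
     \<and> (\<forall>p < n. E p \<subseteq> {1..int n} \<and> card (E p) = k)
     \<and> inj_on E {0..<n}
     \<and> (\<forall>p < n. {v p, v ((p + 1) mod n)} \<subseteq> E p)
     \<and> E ` {0..<n} = set ` C_set n k g"
proof -
  have n0: "0 < n" using assms(3) by simp
  have pn: "prime (int n)" using assms(1) by simp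
  obtain \<sigma> c where sig: "\<sigma> \<in> {sigma_min k .. sigma_max n k}" and cS: "c \<in> S_set n k \<sigma>"
    and gc: "g = c @ [if \<sigma> \<le> int n div 2 then - \<sigma> else int n - \<sigma>]"
    using assms(4) unfolding G_tot_def G_set_def by blast
  have lenc: "length c = k - 1" and sumc: "sum_list c = \<sigma>"
    and cb: "\<And>i. i < k - 1 \<Longrightarrow> 1 \<le> c ! i"
    using cS unfolding S_set_def by auto
  have leng: "length g = k" using lenc gc assms(2) by simp
  have gi: "\<And>i. i < k - 1 \<Longrightarrow> g ! i = c ! i" using gc lenc by (simp add: nth_append)
  have ceil1: "\<lceil>real n / real k\<rceil> \<ge> 1" using n0 assms(2) by simp
  have "\<sigma> \<le> int n - \<lceil>real n / real k\<rceil>" using sig unfolding sigma_max_def by simp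
  then have sigmax: "\<sigma> \<le> int n - 1" using ceil1 by linarith
  define f where "f i = sum_list (take i g)" for i
  have fsuc: "\<And>i. i < k - 1 \<Longrightarrow> f (Suc i) = f i + g ! i"
    unfolding f_def using leng by (simp add: take_Suc_conv_app_nth)
  have fk: "f (k - 1) = \<sigma>" unfolding f_def using gc lenc sumc by simp
  have f0: "f 0 = 0" unfolding f_def by simp
  define g1 where "g1 = g ! 0"
  have f1: "f 1 = g1" using fsuc[of 0] f0 assms(2) unfolding g1_def by simp
  have fmono: "\<And>i. j \<le> k - 1 \<Longrightarrow> i \<le> j \<Longrightarrow> f i + int (j - i) \<le> f j" for j
  proof (induction j)
    case 0 then show ?case by simp
  next
    case (Suc j)
    show ?case
    proof (cases "i = Suc j")
      case True then show ?thesis by simp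
    next
      case False
      then have "i \<le> j" using Suc.prems by simp
      then have "f i + int (j - i) \<le> f j" using Suc by simp
      moreover have "f (Suc j) = f j + g ! j" using fsuc Suc.prems by simp
      moreover have "g ! j \<ge> 1" using gi cb Suc.prems by simp
      ultimately show ?thesis using \<open>i \<le> j\<close> by (simp add: Suc_diff_le)
    qed
  qed
  have fb: "\<And>i. i \<le> k - 1 \<Longrightarrow> 0 \<le> f i \<and> f i \<le> \<sigma>"
    using fmono[of _ 0] fmono[of "k - 1"] f0 fk by fastforce
  have g1b: "1 \<le> g1 \<and> g1 \<le> int n - 1"
  proof -
    have k1: "1 \<le> k - 1" using assms(2) by simp
    show ?thesis using fmono[of 1 0, OF k1] fb[of 1, OF k1] f0 f1 sigmax by auto
  qed
  have fdist: "\<And>i j. i < k \<Longrightarrow> j < k \<Longrightarrow> int n dvd (f i - f j) \<Longrightarrow> i = j"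
  proof -
    have *: "\<And>i j. i < j \<Longrightarrow> j < k \<Longrightarrow> \<not> int n dvd (f j - f i)"
    proof -
      fix i j assume "i < j" "j < k"
      then have "f i + int (j - i) \<le> f j" using fmono by simp
      moreover have "f j \<le> \<sigma>" "0 \<le> f i" using fb \<open>i<j\<close> \<open>j<k\<close> by auto
      ultimately show "\<not> int n dvd (f j - f i)"
        using not_dvd_small[of "f j - f i" n] \<open>i<j\<close> sigmax by simp
    qed
    fix i j assume "i < k" "j < k" "int n dvd (f i - f j)"
    then show "i = j" using *[of i j] *[of j i]
      by (metis dvd_diff_commute linorder_neqE_nat)
  qed
  have noz: "\<And>p q. p < n \<Longrightarrow> q < n \<Longrightarrow> int n dvd (int p - int q) * g1 \<Longrightarrow> p = q"
  proof -
    have ng: "\<not> int n dvd g1" using not_dvd_small[of g1 n] g1b by simp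
    have *: "\<And>p q. p < q \<Longrightarrow> q < n \<Longrightarrow> \<not> int n dvd (int q - int p) * g1"
    proof
      fix p q assume pq: "p < q" "q < n" "int n dvd (int q - int p) * g1"
      then have "int n dvd (int q - int p) \<or> int n dvd g1" using pn prime_dvd_mult_iff by blast
      moreover have "\<not> int n dvd (int q - int p)"
        using not_dvd_small[of "int q - int p" n] pq by simp
      ultimately show False using ng by blast
    qed
    fix p q assume "p < n" "q < n" "int n dvd (int p - int q) * g1"
    moreover have "(int q - int p) * g1 = - ((int p - int q) * g1)" by (simp add: algebra_simps)
    ultimately show "p = q" using *[of p q] *[of q p]
      by (metis dvd_minus_iff linorder_neqE_nat)
  qed
  have rep: "rep_vec k g = map (\<lambda>i. 1 + f i) [0..<k]" by (simp add: rep_vec_def f_def)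
  have Eeq: "\<And>p. E p = (\<lambda>i. modn n (1 + f i + int p * g1)) ` {0..<k}"
    by (simp add: E_def rep g1_def image_image)
  have einj: "\<And>p. inj_on (\<lambda>i. modn n (1 + f i + int p * g1)) {0..<k}"
  proof (rule inj_onI)
    fix p i j assume "i \<in> {0..<k}" "j \<in> {0..<k}"
      "modn n (1 + f i + int p * g1) = modn n (1 + f j + int p * g1)"
    moreover have "(1 + f i + int p * g1) - (1 + f j + int p * g1) = f i - f j" by simp
    ultimately show "i = j" using modn_eq_iff[OF n0] fdist by auto
  qed
  have cardE: "\<And>p. card (E p) = k" using Eeq einj by (simp add: card_image)
  have Esub: "\<And>p. E p \<subseteq> {1..int n}" using Eeq modn_range[OF n0] by auto
  have vinE: "\<And>p. v p \<in> E p"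
  proof -
    fix p
    have "v p = modn n (1 + f 0 + int p * g1)" using f0 by (simp add: v_def g1_def)
    then show "v p \<in> E p" using Eeq assms(2) by auto
  qed
  have vnext: "\<And>p. v ((p + 1) mod n) \<in> E p"
  proof -
    fix p
    have i1: "int ((p+1) mod n) = (int p + 1) mod int n" by (simp add: of_nat_mod add.commute)
    have "int n dvd ((int p + 1) mod int n - (int p + 1))"
      by (metis mod_eq_dvd_iff mod_mod_trivial)
    then have "int n dvd ((int p + 1) mod int n - (int p + 1)) * g1" by (rule dvd_mult2)
    moreover have "((int p + 1) mod int n - (int p + 1)) * g1
        = (1 + int ((p+1) mod n) * g1) - (1 + f 1 + int p * g1)"
      using f1 i1 by (simp add: algebra_simps)
    ultimately have "v ((p + 1) mod n) = modn n (1 + f 1 + int p * g1)"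
      using modn_eq_iff[OF n0] by (simp add: v_def g1_def)
    then show "v ((p + 1) mod n) \<in> E p" using Eeq assms(2) by auto
  qed
  have vinj: "inj_on v {0..<n}"
  proof (rule inj_onI)
    fix p q assume "p \<in> {0..<n}" "q \<in> {0..<n}" "v p = v q"
    moreover have "(1 + int p * g1) - (1 + int q * g1) = (int p - int q) * g1"
      by (simp add: algebra_simps)
    ultimately show "p = q" using modn_eq_iff[OF n0] noz by (auto simp: v_def g1_def)
  qed
  have vsub: "v ` {0..<n} \<subseteq> {1..int n}" using modn_range[OF n0] by (auto simp: v_def)
  have "card (v ` {0..<n}) = card {1..int n}" using vinj by (simp add: card_image)
  then have vim: "v ` {0..<n} = {1..int n}" using vsub by (simp add: card_subset_eq)
  have vbij: "bij_betw v {0..<n} {1..int n}" using vinj vim by (simp add: bij_betw_def)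
  define S where "S = (\<Sum>i\<in>{0..<k}. 1 + f i)"
  have hs: "\<And>p. (\<Sum>x\<in>E p. x) mod int n = (S + int k * (int p * g1)) mod int n"
  proof -
    fix p
    have "(\<Sum>x\<in>E p. x) = (\<Sum>i\<in>{0..<k}. modn n (1 + f i + int p * g1))"
      using Eeq einj by (simp add: sum.reindex)
    also have "\<dots> mod int n = (\<Sum>i\<in>{0..<k}. modn n (1 + f i + int p * g1) mod int n) mod int n"
      by (simp add: mod_sum_eq)
    also have "\<dots> = (\<Sum>i\<in>{0..<k}. (1 + f i + int p * g1) mod int n) mod int n"
      by (simp add: modn_mod)
    also have "\<dots> = (\<Sum>i\<in>{0..<k}. (1 + f i + int p * g1)) mod int n"
      by (simp add: mod_sum_eq)
    also have "(\<Sum>i\<in>{0..<k}. (1 + f i + int p * g1)) = S + int k * (int p * g1)"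
      by (simp add: S_def sum.distrib)
    finally show "(\<Sum>x\<in>E p. x) mod int n = (S + int k * (int p * g1)) mod int n" .
  qed
  have Einj: "inj_on E {0..<n}"
  proof (rule inj_onI)
    fix p q assume pq: "p \<in> {0..<n}" "q \<in> {0..<n}" "E p = E q"
    then have "(S + int k * (int p * g1)) mod int n = (S + int k * (int q * g1)) mod int n"
      using hs by metis
    then have "int n dvd (S + int k * (int p * g1)) - (S + int k * (int q * g1))"
      by (simp add: mod_eq_dvd_iff)
    moreover have "(S + int k * (int p * g1)) - (S + int k * (int q * g1)) = int k * ((int p - int q) * g1)"
      by (simp add: algebra_simps)
    ultimately have "int n dvd int k \<or> int n dvd (int p - int q) * g1"
      using pn prime_dvd_mult_iff by metis
    moreover have "\<not> int n dvd int k" using not_dvd_small[of "int k" n] assms(2,3) by simp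
    ultimately show "p = q" using noz pq by auto
  qed
  have Eset: "\<And>p. E p = (\<lambda>x. modn n (x + int p * g1)) ` set (rep_vec k g)"
    by (simp add: E_def g1_def)
  have Cs: "set ` C_set n k g = {(\<lambda>x. modn n (x + int q)) ` set (rep_vec k g) | q. q < n}"
  proof (rule set_eqI)
    fix X
    show "X \<in> set ` C_set n k g \<longleftrightarrow> X \<in> {(\<lambda>x. modn n (x + int q)) ` set (rep_vec k g) | q. q < n}"
    proof
      assume "X \<in> set ` C_set n k g"
      then obtain p where "p < n" "X = set (map (\<lambda>x. modn n (x + int p)) (rep_vec k g))"
        unfolding C_set_def by blast
      then show "X \<in> {(\<lambda>x. modn n (x + int q)) ` set (rep_vec k g) | q. q < n}" by auto
    next
      assume "X \<in> {(\<lambda>x. modn n (x + int q)) ` set (rep_vec k g) | q. q < n}"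
      then obtain p where "p < n" "X = (\<lambda>x. modn n (x + int p)) ` set (rep_vec k g)" by blast
      then have "X = set (map (\<lambda>x. modn n (x + int p)) (rep_vec k g))" by simp
      then show "X \<in> set ` C_set n k g" unfolding C_set_def using \<open>p < n\<close> by blast
    qed
  qed
  have shift: "\<And>p q. int n dvd (int p * g1 - int q) \<Longrightarrow> E p = (\<lambda>x. modn n (x + int q)) ` set (rep_vec k g)"
  proof -
    fix p q assume d: "int n dvd (int p * g1 - int q)"
    have "\<And>x. modn n (x + int p * g1) = modn n (x + int q)"
    proof -
      fix x
      have "(x + int p * g1) - (x + int q) = int p * g1 - int q" by simp
      then show "modn n (x + int p * g1) = modn n (x + int q)" using d modn_eq_iff[OF n0] by simp
    qed
    then show "E p = (\<lambda>x. modn n (x + int q)) ` set (rep_vec k g)" using Eset by simp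
  qed
  have Cpart: "E ` {0..<n} = set ` C_set n k g"
  proof
    show "E ` {0..<n} \<subseteq> set ` C_set n k g"
    proof
      fix X assume "X \<in> E ` {0..<n}"
      then obtain p where p: "p < n" "X = E p" by auto
      define q where "q = nat ((int p * g1) mod int n)"
      have qi: "int q = (int p * g1) mod int n" using n0 by (simp add: q_def)
      have qn: "q < n" using n0 by (simp add: q_def nat_less_iff)
      have "int n dvd (int p * g1 - int q)" unfolding qi
        by (metis mod_eq_dvd_iff mod_mod_trivial)
      then have "X = (\<lambda>x. modn n (x + int q)) ` set (rep_vec k g)" using shift p by simp
      then show "X \<in> set ` C_set n k g" using Cs qn by auto
    qed
  next
    show "set ` C_set n k g \<subseteq> E ` {0..<n}"
    proof
      fix X assume "X \<in> set ` C_set n k g"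
      then obtain q where q: "q < n" "X = (\<lambda>x. modn n (x + int q)) ` set (rep_vec k g)"
        using Cs by auto
      have "modn n (1 + int q) \<in> v ` {0..<n}" using vim modn_range[OF n0] by simp
      then obtain p where p: "p < n" "v p = modn n (1 + int q)" by auto
      moreover have "(1 + int p * g1) - (1 + int q) = int p * g1 - int q" by simp
      ultimately have "int n dvd (int p * g1 - int q)"
        using modn_eq_iff[OF n0] by (simp add: v_def g1_def)
      then have "X = E p" using shift q by simp
      then show "X \<in> E ` {0..<n}" using p by simp
    qed
  qed
  have edges: "\<forall>p < n. E p \<subseteq> {1..int n} \<and> card (E p) = k" using Esub cardE by simp
  have adj: "\<forall>p < n. {v p, v ((p + 1) mod n)} \<subseteq> E p" using vinE vnext by simp
  have "berge_ham_cycle n k v E"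
    unfolding berge_ham_cycle_def hyperedges_K_def using vbij edges Einj adj by simp
  then show ?thesis using vbij edges Einj adj Cpart by simp
qed
end
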